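(* Let $\gamma,\sigma:[a,b]\to V$ be continuous paths of bounded variation and let $f:(-\pi,\pi)\to\mathbb{C}$ be bounded and integrable with Fourier coefficients $\phi_k=\frac1{2\pi}\int_{-\pi}^\pi f(x)e^{-ikx}dx$, $k\in\mathbb{Z}$. (1) If $\phi_k=0$ for all $k<0$, then $K_\phi^{\gamma,\sigma}(s,t)=\frac1{2\pi}\int_{-\pi}^\pi K^{e^{-ix}\gamma,\sigma}(s,t)f(x)\,dx$. (2) Suppose $f$ is real-valued with real Fourier series $f=a_0+\sum_{k\ge1}a_k\cos(k\cdot)+\sum_{k\ge1}b_k\sin(k\cdot)$, $a_k,b_k\in\mathbb{R}$. If $\langle p,q\rangle_\phi:=\sum_{k\ge0}a_k\langle p_k,q_k\rangle_k$ and $K_\phi^{\gamma,\sigma}(s,t):=\langle S(\gamma)_{a,s},S(\sigma)_{a,t}\rangle_\phi$, then \[ K_\phi^{\gamma,\sigma}(s,t)=\frac1\pi\int_{-\pi}^\pi\mathcal{R}K_x^{\gamma,\sigma}(s,t)f(x)\,dx-a_0, \] where $\mathcal{R}K_x^{\gamma,\sigma}(s,t)=\operatorname{Re}K^{e^{ix}\gamma,\sigma}(s,t)$.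
   Context: $V$ is a finite-dimensional real inner product space, $\langle\cdot,\cdot\rangle_k$ the induced Hilbert–Schmidt inner product on $V^{\otimes k}$. Signature: $S(\gamma)^0=1$, $S(\gamma)^k_{s,t}=\int_{s<u_1<\dots<u_k<t}d\gamma_{u_1}\otimes\cdots\otimes d\gamma_{u_k}$; $p_k$ is the degree-$k$ component of $p$. Write $c_k(s,t)=\langle S(\gamma)^k_{a,s},S(\sigma)^k_{a,t}\rangle_k$. In (1), $K_\phi^{\gamma,\sigma}(s,t)=\sum_{k\in\mathbb{Z}}\phi_kc_{|k|}(s,t)$. For $w\in\mathbb{C}$, $K^{w\gamma,\sigma}(s,t):=\sum_{k\ge0}w^kc_k(s,t)$. *)

theory Defs
  imports "HOL-Analysis.Analysis"
begin

definition tagged_partition_of :: "real \<Rightarrow> real \<Rightarrow> nat \<Rightarrow> (nat \<Rightarrow> real) \<Rightarrow> (nat \<Rightarrow> real) \<Rightarrow> bool" where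
  "tagged_partition_of a b n x xi \<longleftrightarrow>
     x 0 = a \<and> x n = b \<and> (\<forall>i<n. x i \<le> xi i \<and> xi i \<le> x (Suc i))"

definition bounded_variation_on :: "real \<Rightarrow> real \<Rightarrow> (real \<Rightarrow> 'v::real_normed_vector) \<Rightarrow> bool" where
  "bounded_variation_on a b g \<longleftrightarrow>
     (\<exists>B. \<forall>n x. x 0 = a \<and> x n = b \<and> (\<forall>i<n. x i \<le> x (Suc i)) \<longrightarrow>
        (\<Sum>i<n. norm (g (x (Suc i)) - g (x i))) \<le> B)"

definition has_RS_integral :: "(real \<Rightarrow> real) \<Rightarrow> (real \<Rightarrow> real) \<Rightarrow> real \<Rightarrow> real \<Rightarrow> real \<Rightarrow> bool" where
  "has_RS_integral f g a b I \<longleftrightarrow>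
     (\<forall>\<epsilon>>0. \<exists>\<delta>>0. \<forall>n x xi. tagged_partition_of a b n x xi \<and> (\<forall>i<n. x (Suc i) - x i < \<delta>) \<longrightarrow>
        \<bar>(\<Sum>i<n. f (xi i) * (g (x (Suc i)) - g (x i))) - I\<bar> < \<epsilon>)"

definition RS_integral :: "(real \<Rightarrow> real) \<Rightarrow> (real \<Rightarrow> real) \<Rightarrow> real \<Rightarrow> real \<Rightarrow> real" where
  "RS_integral f g a b = (THE I. has_RS_integral f g a b I)"

text \<open>Signature coefficients: sig_rev \<gamma> a t w is the coefficient of the degree-|w| signature
  S(\<gamma>)_{a,t} at the basis tensor e_{w_k} \<otimes> ... \<otimes> e_{w_1} (word w read in reverse), i.e.
  the last letter of the (reversed) word is integrated last.\<close>
fun sig_rev :: "(real \<Rightarrow> 'v::euclidean_space) \<Rightarrow> real \<Rightarrow> real \<Rightarrow> 'v list \<Rightarrow> real" where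
  "sig_rev \<gamma> a t [] = 1"
| "sig_rev \<gamma> a t (e # w) = RS_integral (\<lambda>u. sig_rev \<gamma> a u w) (\<lambda>u. \<gamma> u \<bullet> e) a t"

text \<open>Coefficient of S(\<gamma>)^k_{a,t} at e_{i_1} \<otimes> ... \<otimes> e_{i_k} for the word w = [e_{i_1},...,e_{i_k}]:
  \<integral>_{a<u_1<...<u_k<t} d\<gamma>^{i_1}_{u_1} ... d\<gamma>^{i_k}_{u_k}.\<close>
definition sig_coeff :: "(real \<Rightarrow> 'v::euclidean_space) \<Rightarrow> real \<Rightarrow> real \<Rightarrow> 'v list \<Rightarrow> real" where
  "sig_coeff \<gamma> a t w = sig_rev \<gamma> a t (rev w)"

text \<open>Words of length k in the orthonormal basis of V (basis of V^{\<otimes>k}).\<close>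
definition words :: "nat \<Rightarrow> 'v::euclidean_space list set" where
  "words k = {w. set w \<subseteq> Basis \<and> length w = k}"

text \<open>c_k(s,t) = <S(\<gamma>)^k_{a,s}, S(\<sigma>)^k_{a,t}>_k (Hilbert--Schmidt inner product, computed in the
  orthonormal product basis).\<close>
definition sig_ip :: "(real \<Rightarrow> 'v::euclidean_space) \<Rightarrow> (real \<Rightarrow> 'v) \<Rightarrow> real \<Rightarrow> nat \<Rightarrow> real \<Rightarrow> real \<Rightarrow> real" where
  "sig_ip \<gamma> \<sigma> a k s t = (\<Sum>w\<in>words k. sig_coeff \<gamma> a s w * sig_coeff \<sigma> a t w)"

definition fourier_coeff :: "(real \<Rightarrow> complex) \<Rightarrow> int \<Rightarrow> complex" where
  "fourier_coeff f k = integral {-pi<..<pi} (\<lambda>x. f x * cis (- (of_int k * x))) / (2 * pi)"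

definition K_phi :: "(int \<Rightarrow> complex) \<Rightarrow> (real \<Rightarrow> 'v::euclidean_space) \<Rightarrow> (real \<Rightarrow> 'v) \<Rightarrow> real \<Rightarrow> real \<Rightarrow> real \<Rightarrow> complex" where
  "K_phi \<phi> \<gamma> \<sigma> a s t = (\<Sum>\<^sub>\<infinity>k\<in>(UNIV::int set). \<phi> k * of_real (sig_ip \<gamma> \<sigma> a (nat \<bar>k\<bar>) s t))"

definition K_scaled :: "complex \<Rightarrow> (real \<Rightarrow> 'v::euclidean_space) \<Rightarrow> (real \<Rightarrow> 'v) \<Rightarrow> real \<Rightarrow> real \<Rightarrow> real \<Rightarrow> complex" where
  "K_scaled w \<gamma> \<sigma> a s t = (\<Sum>k. w ^ k * of_real (sig_ip \<gamma> \<sigma> a k s t))"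

definition fourier_cos :: "(real \<Rightarrow> real) \<Rightarrow> nat \<Rightarrow> real" where
  "fourier_cos f k = (if k = 0 then integral {-pi<..<pi} f / (2 * pi)
                      else integral {-pi<..<pi} (\<lambda>x. f x * cos (real k * x)) / pi)"

definition fourier_sin :: "(real \<Rightarrow> real) \<Rightarrow> nat \<Rightarrow> real" where
  "fourier_sin f k = integral {-pi<..<pi} (\<lambda>x. f x * sin (real k * x)) / pi"

definition K_phi_real :: "(nat \<Rightarrow> real) \<Rightarrow> (real \<Rightarrow> 'v::euclidean_space) \<Rightarrow> (real \<Rightarrow> 'v) \<Rightarrow> real \<Rightarrow> real \<Rightarrow> real \<Rightarrow> real" where
  "K_phi_real ak \<gamma> \<sigma> a s t = (\<Sum>k. ak k * sig_ip \<gamma> \<sigma> a k s t)"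

end

theory Submission
  imports Defs
begin


definition prt :: "real \<Rightarrow> real \<Rightarrow> nat \<Rightarrow> (nat \<Rightarrow> real) \<Rightarrow> bool" where
  "prt c d n x \<longleftrightarrow> x 0 = c \<and> x n = d \<and> (\<forall>i<n. x i \<le> x (Suc i))"

definition vsum :: "(real \<Rightarrow> 'v::real_normed_vector) \<Rightarrow> (nat \<Rightarrow> real) \<Rightarrow> nat \<Rightarrow> real" where
  "vsum g x n = (\<Sum>i<n. norm (g (x (Suc i)) - g (x i)))"

definition cl :: "real \<Rightarrow> real \<Rightarrow> real \<Rightarrow> real" where
  "cl c d y = min d (max c y)"

lemma prt_mono:
  fixes x :: "nat \<Rightarrow> real"
  assumes "\<forall>i<n. x i \<le> x (Suc i)" "i \<le> j" "j \<le> n"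
  shows "x i \<le> x j"
  using assms(2,3)
proof (induction j rule: dec_induct)
  case base then show ?case by simp
next
  case (step k)
  then have "x k \<le> x (Suc k)" using assms(1) by auto
  then show ?case using step by linarith
qed

lemma prt_range:
  assumes "prt c d n x" "i \<le> n"
  shows "c \<le> x i" "x i \<le> d"
  using prt_mono[of n x 0 i] prt_mono[of n x i n] assms unfolding prt_def by auto

lemma prt_cl:
  assumes "prt a b n x" "a \<le> c" "c \<le> d" "d \<le> b"
  shows "prt c d n (\<lambda>i. cl c d (x i))"
  using assms unfolding prt_def cl_def by (auto simp: min_def max_def)

lemma vsum_nonneg: "0 \<le> vsum g x n"
  unfolding vsum_def by (auto intro: sum_nonneg)

lemma split_term:
  fixes g :: "real \<Rightarrow> 'v::real_normed_vector"
  assumes "p \<le> q" "p0 \<le> p" "q \<le> q0" "p0 \<le> c" "c \<le> q0"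
  shows "norm (g q - g p) \<le> norm (g (cl p0 c q) - g (cl p0 c p)) + norm (g (cl c q0 q) - g (cl c q0 p))"
proof -
  consider "q \<le> c" | "c \<le> p" | "p < c" "c < q" by linarith
  then show ?thesis
  proof cases
    case 1 then show ?thesis using assms by (simp add: cl_def min_def max_def)
  next
    case 2 then show ?thesis using assms by (simp add: cl_def min_def max_def)
  next
    case 3
    then have "cl p0 c q = c" "cl p0 c p = p" "cl c q0 q = q" "cl c q0 p = c"
      using assms by (auto simp: cl_def min_def max_def)
    moreover have "norm (g q - g p) \<le> norm (g c - g p) + norm (g q - g c)"
      by (metis add.commute diff_add_cancel norm_triangle_ineq add_diff_eq)
    ultimately show ?thesis by simp
  qed
qed

lemma vsum_split:
  fixes g :: "real \<Rightarrow> 'v::real_normed_vector"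
  assumes "prt p q n x" "p \<le> c" "c \<le> q"
  shows "vsum g x n \<le> vsum g (\<lambda>i. cl p c (x i)) n + vsum g (\<lambda>i. cl c q (x i)) n"
proof -
  have "vsum g x n \<le> (\<Sum>i<n. norm (g (cl p c (x (Suc i))) - g (cl p c (x i))) + norm (g (cl c q (x (Suc i))) - g (cl c q (x i))))"
    unfolding vsum_def
  proof (rule sum_mono)
    fix i assume "i \<in> {..<n}"
    then show "norm (g (x (Suc i)) - g (x i)) \<le> norm (g (cl p c (x (Suc i))) - g (cl p c (x i))) + norm (g (cl c q (x (Suc i))) - g (cl c q (x i)))"
      using assms prt_range[OF assms(1), of i] prt_range[OF assms(1), of "Suc i"]
      by (intro split_term) (auto simp: prt_def)
  qed
  then show ?thesis by (simp add: vsum_def sum.distrib)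
qed

definition cat :: "nat \<Rightarrow> (nat \<Rightarrow> 'a) \<Rightarrow> (nat \<Rightarrow> 'a) \<Rightarrow> nat \<Rightarrow> 'a" where
  "cat n x y = (\<lambda>k. if k \<le> n then x k else y (k - n))"
definition catt :: "nat \<Rightarrow> (nat \<Rightarrow> 'a) \<Rightarrow> (nat \<Rightarrow> 'a) \<Rightarrow> nat \<Rightarrow> 'a" where
  "catt n x y = (\<lambda>k. if k < n then x k else y (k - n))"

lemma sum_cat:
  assumes "x n = y 0"
  shows "(\<Sum>k<n+m. G (cat n x y k) (cat n x y (Suc k)) (catt n \<xi> \<eta> k)) =
         (\<Sum>k<n. G (x k) (x (Suc k)) (\<xi> k)) + (\<Sum>k<m. G (y k) (y (Suc k)) (\<eta> k))"
proof (induction m)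
  case 0
  have "(\<Sum>k<n. G (cat n x y k) (cat n x y (Suc k)) (catt n \<xi> \<eta> k)) = (\<Sum>k<n. G (x k) (x (Suc k)) (\<xi> k))"
    by (rule sum.cong) (auto simp: cat_def catt_def)
  then show ?case by simp
next
  case (Suc m)
  have "G (cat n x y (n+m)) (cat n x y (Suc (n+m))) (catt n \<xi> \<eta> (n+m)) = G (y m) (y (Suc m)) (\<eta> m)"
    using assms by (cases m) (auto simp: cat_def catt_def Suc_diff_le)
  then show ?case using Suc by (simp add: add.assoc)
qed

lemma prt_cat:
  assumes "prt c e n x" "prt e d m y"
  shows "prt c d (n+m) (cat n x y)"
  unfolding prt_def
proof (intro conjI allI impI)
  show "cat n x y 0 = c" using assms by (simp add: cat_def prt_def)
  show "cat n x y (n+m) = d" using assms by (cases m) (auto simp: cat_def prt_def)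
  fix i assume i: "i < n + m"
  show "cat n x y i \<le> cat n x y (Suc i)"
  proof (cases "i < n")
    case True then show ?thesis using assms by (auto simp: cat_def prt_def)
  next
    case False
    then obtain j where j: "i = n + j" "j < m" using i by (metis add_diff_inverse_nat nat_add_left_cancel_less)
    show ?thesis
    proof (cases j)
      case 0 then show ?thesis using assms j by (auto simp: cat_def prt_def)
    next
      case (Suc j')
      then show ?thesis using assms j by (auto simp: cat_def prt_def)
    qed
  qed
qed

lemma vsum_cat:
  assumes "prt c e n x" "prt e d m y"
  shows "vsum g (cat n x y) (n+m) = vsum g x n + vsum g y m"
  using sum_cat[where G="\<lambda>p q r. norm (g q - g p)" and x=x and n=n and y=y and m=m and \<xi>="\<lambda>_. 0" and \<eta>="\<lambda>_. 0"] assms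
  unfolding vsum_def prt_def by simp



definition bvB :: "(real \<Rightarrow> 'v::real_normed_vector) \<Rightarrow> real \<Rightarrow> real \<Rightarrow> real \<Rightarrow> bool" where
  "bvB g a b B \<longleftrightarrow> (\<forall>n x. prt a b n x \<longrightarrow> vsum g x n \<le> B)"

definition var :: "(real \<Rightarrow> 'v::real_normed_vector) \<Rightarrow> real \<Rightarrow> real \<Rightarrow> real" where
  "var g c d = Sup {vsum g x n | x n. prt c d n x}"

definition one :: "real \<Rightarrow> real \<Rightarrow> nat \<Rightarrow> real" where
  "one c d = (\<lambda>i. if i = 0 then c else d)"

lemma prt_one: "c \<le> d \<Longrightarrow> prt c d 1 (one c d)"
  by (simp add: prt_def one_def)

lemma vsum_one: "vsum g (one c d) 1 = norm (g d - g c)"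
  by (simp add: vsum_def one_def)

lemma bvB_sub:
  assumes "bvB g a b B" "a \<le> c" "c \<le> d" "d \<le> b" "prt c d n x"
  shows "vsum g x n \<le> B"
proof -
  have p1: "prt a d (1+n) (cat 1 (one a c) x)"
    by (rule prt_cat[OF prt_one]) (use assms in auto)
  have p2: "prt a b (1+n+1) (cat (1+n) (cat 1 (one a c) x) (one d b))"
    by (rule prt_cat[OF p1 prt_one]) (use assms in auto)
  have "vsum g (cat (1+n) (cat 1 (one a c) x) (one d b)) (1+n+1)
        = vsum g (one a c) 1 + vsum g x n + vsum g (one d b) 1"
    using vsum_cat[OF p1 prt_one, of b g] vsum_cat[OF prt_one assms(5), of a g] assms by simp
  moreover have "vsum g (cat (1+n) (cat 1 (one a c) x) (one d b)) (1+n+1) \<le> B"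
    using assms(1) p2 unfolding bvB_def by blast
  ultimately show ?thesis using vsum_nonneg[of g "one a c" 1] vsum_nonneg[of g "one d b" 1] by linarith
qed

lemma bvB_subI:
  assumes "bvB g a b B" "a \<le> c" "c \<le> d" "d \<le> b"
  shows "bvB g c d B"
  using bvB_sub[OF assms] unfolding bvB_def by blast

context
  fixes g :: "real \<Rightarrow> 'v::real_normed_vector" and c d B :: real
  assumes bv: "bvB g c d B" and cd: "c \<le> d"
begin

lemma var_set_ne: "{vsum g x n | x n. prt c d n x} \<noteq> {}"
  using prt_one[OF cd] by blast

lemma var_set_bdd: "bdd_above {vsum g x n | x n. prt c d n x}"
  using bv unfolding bvB_def bdd_above_def by blast

lemma var_upper: "prt c d n x \<Longrightarrow> vsum g x n \<le> var g c d"
  unfolding var_def by (rule cSup_upper[OF _ var_set_bdd]) blast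

lemma var_least: "(\<And>n x. prt c d n x \<Longrightarrow> vsum g x n \<le> M) \<Longrightarrow> var g c d \<le> M"
  unfolding var_def by (rule cSup_least[OF var_set_ne]) blast

lemma var_approx:
  assumes "e > 0"
  obtains n x where "prt c d n x" "var g c d - e < vsum g x n"
proof -
  have "var g c d - e < Sup {vsum g x n | x n. prt c d n x}" using assms by (simp add: var_def)
  then obtain v where "v \<in> {vsum g x n | x n. prt c d n x}" "var g c d - e < v"
    using less_cSupD[OF var_set_ne] by blast
  then show ?thesis using that by blast
qed

lemma var_step: "norm (g d - g c) \<le> var g c d"
  using var_upper[OF prt_one[OF cd]] vsum_one by metis

lemma var_nonneg: "0 \<le> var g c d"
  using var_step norm_ge_zero order_trans by blast

end

lemma var_superadd:
  fixes g :: "real \<Rightarrow> 'v::real_normed_vector"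
  assumes bv: "bvB g c d B" and "c \<le> e" "e \<le> d"
  shows "var g c e + var g e d \<le> var g c d"
proof -
  have cd: "c \<le> d" using assms by linarith
  have bv1: "bvB g c e B" and bv2: "bvB g e d B" using bvB_subI[OF bv] assms by auto
  have key: "vsum g x n + vsum g y m \<le> var g c d" if "prt c e n x" "prt e d m y" for n x m y
    using vsum_cat[OF that, of g] var_upper[OF bv cd prt_cat[OF that]] by simp
  have "var g c e \<le> var g c d - vsum g y m" if "prt e d m y" for m y
    using key[OF _ that] by (intro var_least[OF bv1 assms(2)]) (simp add: algebra_simps)
  then have "var g e d \<le> var g c d - var g c e"
    by (intro var_least[OF bv2 assms(3)]) (simp add: algebra_simps)
  then show ?thesis by simp
qed



lemma cl_range: "c \<le> d \<Longrightarrow> c \<le> cl c d y \<and> cl c d y \<le> d"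
  by (auto simp: cl_def)

lemma var_ucont:
  fixes g :: "real \<Rightarrow> 'v::real_normed_vector"
  assumes bv: "bvB g a b B" and ab: "a \<le> b" and cont: "continuous_on {a..b} g" and e: "e > 0"
  shows "\<exists>\<delta>>0. \<forall>t t'. a \<le> t \<longrightarrow> t \<le> t' \<longrightarrow> t' \<le> b \<longrightarrow> t' - t < \<delta> \<longrightarrow> var g a t' - var g a t < e"
proof -
  obtain n P where P: "prt a b n P" "var g a b - e/2 < vsum g P n"
    using var_approx[OF bv ab, of "e/2"] e by auto
  have "uniformly_continuous_on {a..b} g"
    using compact_uniformly_continuous[OF cont] by simp
  then obtain \<delta> where \<delta>: "\<delta> > 0" "\<And>x y. x \<in> {a..b} \<Longrightarrow> y \<in> {a..b} \<Longrightarrow> dist y x < \<delta> \<Longrightarrow> dist (g y) (g x) < e / (2 * (n+1))"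
    unfolding uniformly_continuous_on_def using e by (metis divide_pos_pos half_gt_zero of_nat_0_less_iff zero_less_Suc add.commute Suc_eq_plus1 mult_pos_pos zero_less_numeral)
  show ?thesis
  proof (intro exI[of _ \<delta>] conjI allI impI \<delta>(1))
    fix t t' assume tt: "a \<le> t" "t \<le> t'" "t' \<le> b" "t' - t < \<delta>"
    define Q where "Q = (\<lambda>i. cl t b (P i))"
    have Q: "prt t b n Q" unfolding Q_def by (rule prt_cl[OF P(1)]) (use tt in auto)
    have s1: "vsum g P n \<le> vsum g (\<lambda>i. cl a t (P i)) n + vsum g Q n"
      unfolding Q_def by (rule vsum_split[OF P(1)]) (use tt in auto)
    have s2: "vsum g Q n \<le> vsum g (\<lambda>i. cl t t' (Q i)) n + vsum g (\<lambda>i. cl t' b (Q i)) n"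
      by (rule vsum_split[OF Q]) (use tt in auto)
    have s3: "vsum g (\<lambda>i. cl a t (P i)) n \<le> var g a t"
      by (rule var_upper[OF bvB_subI[OF bv] _ prt_cl[OF P(1)]]) (use tt in auto)
    have s4: "vsum g (\<lambda>i. cl t' b (Q i)) n \<le> var g t' b"
      by (rule var_upper[OF bvB_subI[OF bv] _ prt_cl[OF Q]]) (use tt in auto)
    have s5: "var g a t' + var g t' b \<le> var g a b"
      by (rule var_superadd[OF bv]) (use tt in auto)
    have s6: "vsum g (\<lambda>i. cl t t' (Q i)) n \<le> real n * (e / (2 * (n+1)))"
      unfolding vsum_def
    proof (rule order_trans[OF sum_bounded_above[where K="e / (2 * (n+1))"]])
      fix i assume "i \<in> {..<n}"
      have r: "t \<le> cl t t' y \<and> cl t t' y \<le> t'" for y using cl_range[of t t'] tt by auto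
      have d: "dist (cl t t' (Q (Suc i))) (cl t t' (Q i)) < \<delta>"
        using r[of "Q i"] r[of "Q (Suc i)"] tt by (auto simp: dist_real_def abs_if)
      have "dist (g (cl t t' (Q (Suc i)))) (g (cl t t' (Q i))) < e / (2 * (n+1))"
        by (rule \<delta>(2)[OF _ _ d]) (use r[of "Q i"] r[of "Q (Suc i)"] tt in auto)
      then show "norm (g (cl t t' (Q (Suc i))) - g (cl t t' (Q i))) \<le> e / (2 * (n+1))"
        by (simp add: dist_norm)
    qed simp
    have "real n * (e / (2 * (n+1))) < e/2"
      using e by (simp add: field_simps)
    then show "var g a t' - var g a t < e"
      using P(2) s1 s2 s3 s4 s5 s6 by linarith
  qed
qed



definition rs :: "(real \<Rightarrow> real) \<Rightarrow> (real \<Rightarrow> real) \<Rightarrow> (nat \<Rightarrow> real) \<Rightarrow> (nat \<Rightarrow> real) \<Rightarrow> nat \<Rightarrow> real" where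
  "rs F h x \<xi> n = (\<Sum>i<n. F (\<xi> i) * (h (x (Suc i)) - h (x i)))"

definition mfine :: "real \<Rightarrow> nat \<Rightarrow> (nat \<Rightarrow> real) \<Rightarrow> bool" where
  "mfine \<delta> n x \<longleftrightarrow> (\<forall>i<n. x (Suc i) - x i < \<delta>)"

lemma tp_prt: "tagged_partition_of a b n x \<xi> \<Longrightarrow> prt a b n x"
  unfolding tagged_partition_of_def prt_def by force

lemma cl_low: "y \<le> c \<Longrightarrow> c \<le> d \<Longrightarrow> cl c d y = c"
  by (simp add: cl_def)
lemma cl_high: "d \<le> y \<Longrightarrow> c \<le> d \<Longrightarrow> cl c d y = d"
  by (simp add: cl_def)

lemma cl_telescope:
  fixes h :: "real \<Rightarrow> real"
  assumes "\<forall>i<n. x i \<le> x (Suc i)"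
  shows "(\<Sum>i<n. h (cl (x i) (x (Suc i)) y) - h (x i)) = h (cl (x 0) (x n) y) - h (x 0)"
  using assms
proof (induction n)
  case 0 then show ?case by (simp add: cl_def)
next
  case (Suc n)
  have m: "x 0 \<le> x n" using prt_mono[of n x 0 n] Suc.prems by auto
  have m2: "x n \<le> x (Suc n)" using Suc.prems by auto
  have "h (cl (x 0) (x n) y) - h (x n) + h (cl (x n) (x (Suc n)) y) = h (cl (x 0) (x (Suc n)) y)"
  proof (cases "y \<le> x n")
    case True then show ?thesis using m m2 by (simp add: cl_def min_def max_def)
  next
    case False then show ?thesis using m m2 by (simp add: cl_def min_def max_def)
  qed
  then show ?case using Suc by simp
qed

lemma sum_var_le:
  fixes h :: "real \<Rightarrow> 'v::real_normed_vector"
  assumes bv: "bvB h a b B" and P: "prt a b n x" and k: "k \<le> n"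
  shows "(\<Sum>i<k. var h (x i) (x (Suc i))) \<le> var h (x 0) (x k)"
  using k
proof (induction k)
  case 0
  have "a \<le> b" using prt_range[OF P, of 0] by auto
  then show ?case using var_nonneg[OF bvB_subI[OF bv order_refl order_refl] order_refl] P by (simp add: prt_def)
next
  case (Suc k)
  have r: "a \<le> x 0" "x k \<le> x (Suc k)" "x 0 \<le> x k" "x (Suc k) \<le> b"
    using P Suc.prems prt_mono[of n x 0 k] prt_range[OF P, of "Suc k"] unfolding prt_def by auto
  have "var h (x 0) (x k) + var h (x k) (x (Suc k)) \<le> var h (x 0) (x (Suc k))"
    by (rule var_superadd[OF bvB_subI[OF bv]]) (use r in auto)
  then show ?case using Suc by simp
qed

lemma rs_cauchy:
  fixes F h :: "real \<Rightarrow> real"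
  assumes P: "tagged_partition_of a b n x \<xi>" and Q: "tagged_partition_of a b m y \<eta>"
    and fP: "mfine \<delta> n x" and fQ: "mfine \<delta> m y" and bv: "bvB h a b B"
    and uc: "\<And>u v. u \<in> {a..b} \<Longrightarrow> v \<in> {a..b} \<Longrightarrow> \<bar>u - v\<bar> < 2 * \<delta> \<Longrightarrow> \<bar>F u - F v\<bar> \<le> \<epsilon>"
    and eps: "\<epsilon> \<ge> 0"
  shows "\<bar>rs F h x \<xi> n - rs F h y \<eta> m\<bar> \<le> \<epsilon> * var h a b"
proof -
  have Px: "prt a b n x" and Qy: "prt a b m y" using P Q by (auto intro: tp_prt)
  have ab: "a \<le> b" using prt_range[OF Px, of 0] prt_range[OF Px, of n] by auto
  define d where "d i j = h (cl (x i) (x (Suc i)) (y (Suc j))) - h (cl (x i) (x (Suc i)) (y j))" for i j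
  have xr: "a \<le> x i" "x i \<le> b" if "i \<le> n" for i using prt_range[OF Px that] by auto
  have yr: "a \<le> y j" "y j \<le> b" if "j \<le> m" for j using prt_range[OF Qy that] by auto
  have xm: "x i \<le> x (Suc i)" if "i < n" for i using Px that by (auto simp: prt_def)
  have ym: "y j \<le> y (Suc j)" if "j < m" for j using Qy that by (auto simp: prt_def)
  have da: "(\<Sum>j<m. d i j) = h (x (Suc i)) - h (x i)" if i: "i < n" for i
  proof -
    have "(\<Sum>j<m. d i j) = h (cl (x i) (x (Suc i)) (y m)) - h (cl (x i) (x (Suc i)) (y 0))"
      unfolding d_def by (rule sum_lessThan_telescope)
    also have "\<dots> = h (x (Suc i)) - h (x i)"
      using Qy xr[of i] xr[of "Suc i"] xm[OF i] i by (simp add: prt_def cl_def)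
    finally show ?thesis .
  qed
  have db: "(\<Sum>i<n. d i j) = h (y (Suc j)) - h (y j)" if j: "j < m" for j
  proof -
    have "(\<Sum>i<n. d i j) = (\<Sum>i<n. h (cl (x i) (x (Suc i)) (y (Suc j))) - h (x i)) - (\<Sum>i<n. h (cl (x i) (x (Suc i)) (y j)) - h (x i))"
      unfolding d_def sum_subtractf[symmetric] by simp
    also have "\<dots> = h (cl (x 0) (x n) (y (Suc j))) - h (cl (x 0) (x n) (y j))"
      using cl_telescope[of n x h] Px by (simp add: prt_def)
    also have "\<dots> = h (y (Suc j)) - h (y j)"
      using Px yr[of j] yr[of "Suc j"] j by (simp add: prt_def cl_def)
    finally show ?thesis .
  qed
  have e1: "rs F h x \<xi> n = (\<Sum>i<n. \<Sum>j<m. F (\<xi> i) * d i j)"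
    unfolding rs_def by (rule sum.cong) (auto simp: da sum_distrib_left[symmetric])
  have e2: "rs F h y \<eta> m = (\<Sum>i<n. \<Sum>j<m. F (\<eta> j) * d i j)"
    unfolding rs_def by (subst sum.swap) (rule sum.cong, auto simp: db sum_distrib_left[symmetric])
  have diff: "rs F h x \<xi> n - rs F h y \<eta> m = (\<Sum>i<n. \<Sum>j<m. (F (\<xi> i) - F (\<eta> j)) * d i j)"
    unfolding e1 e2 sum_subtractf[symmetric] by (simp add: algebra_simps)
  have trm: "\<bar>(F (\<xi> i) - F (\<eta> j)) * d i j\<bar> \<le> \<epsilon> * \<bar>d i j\<bar>" if i: "i < n" and j: "j < m" for i j
  proof (cases "d i j = 0")
    case True then show ?thesis by simp
  next
    case False
    have ov: "x i < y (Suc j) \<and> y j < x (Suc i)"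
    proof (rule ccontr)
      assume "\<not> ?thesis"
      then consider "y (Suc j) \<le> x i" | "x (Suc i) \<le> y j" by linarith
      then have "d i j = 0"
        using xm[OF i] ym[OF j] by cases (simp_all add: d_def cl_low cl_high)
      with False show False by simp
    qed
    have t: "x i \<le> \<xi> i" "\<xi> i \<le> x (Suc i)" "y j \<le> \<eta> j" "\<eta> j \<le> y (Suc j)"
      using P Q i j unfolding tagged_partition_of_def by auto
    have "x (Suc i) - x i < \<delta>" "y (Suc j) - y j < \<delta>" using fP fQ i j by (auto simp: mfine_def)
    then have "\<bar>\<xi> i - \<eta> j\<bar> < 2 * \<delta>" using ov t by (simp add: abs_if) linarith?
    then have "\<bar>\<xi> i - \<eta> j\<bar> < 2 * \<delta>" using ov t \<open>x (Suc i) - x i < \<delta>\<close> \<open>y (Suc j) - y j < \<delta>\<close> by (auto simp: abs_if)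
    moreover have "\<xi> i \<in> {a..b}" "\<eta> j \<in> {a..b}"
      using t xr[of i] xr[of "Suc i"] yr[of j] yr[of "Suc j"] i j by auto
    ultimately have "\<bar>F (\<xi> i) - F (\<eta> j)\<bar> \<le> \<epsilon>" using uc by blast
    then show ?thesis by (simp add: abs_mult mult_right_mono)
  qed
  have "\<bar>rs F h x \<xi> n - rs F h y \<eta> m\<bar> \<le> (\<Sum>i<n. \<Sum>j<m. \<bar>(F (\<xi> i) - F (\<eta> j)) * d i j\<bar>)"
    unfolding diff by (rule order_trans[OF sum_abs sum_mono]) (rule sum_abs)
  also have "\<dots> \<le> (\<Sum>i<n. \<Sum>j<m. \<epsilon> * \<bar>d i j\<bar>)"
    by (intro sum_mono trm) auto
  also have "\<dots> = \<epsilon> * (\<Sum>i<n. \<Sum>j<m. \<bar>d i j\<bar>)"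
    by (simp add: sum_distrib_left)
  also have "\<dots> \<le> \<epsilon> * var h a b"
  proof (rule mult_left_mono[OF _ eps])
    have "(\<Sum>i<n. \<Sum>j<m. \<bar>d i j\<bar>) \<le> (\<Sum>i<n. var h (x i) (x (Suc i)))"
    proof (rule sum_mono)
      fix i assume i: "i \<in> {..<n}"
      have "(\<Sum>j<m. \<bar>d i j\<bar>) = vsum h (\<lambda>j. cl (x i) (x (Suc i)) (y j)) m"
        by (simp add: vsum_def d_def)
      also have "\<dots> \<le> var h (x i) (x (Suc i))"
        by (rule var_upper[OF bvB_subI[OF bv] _ prt_cl[OF Qy]])
           (use xr[of i] xr[of "Suc i"] xm[of i] i in auto)
      finally show "(\<Sum>j<m. \<bar>d i j\<bar>) \<le> var h (x i) (x (Suc i))" .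
    qed
    also have "\<dots> \<le> var h a b"
      using sum_var_le[OF bv Px order_refl] Px by (simp add: prt_def)
    finally show "(\<Sum>i<n. \<Sum>j<m. \<bar>d i j\<bar>) \<le> var h a b" .
  qed
  finally show ?thesis .
qed



definition up :: "real \<Rightarrow> real \<Rightarrow> nat \<Rightarrow> nat \<Rightarrow> real" where
  "up a b N = (\<lambda>i. a + (b - a) * real i / real (Suc N))"

lemma up_tagged: "a \<le> b \<Longrightarrow> tagged_partition_of a b (Suc N) (up a b N) (up a b N)"
  unfolding tagged_partition_of_def
proof (intro conjI allI impI)
  assume ab: "a \<le> b"
  show "up a b N 0 = a" by (simp add: up_def)
  have "(b - a) * real (Suc N) / real (Suc N) = b - a" by (rule nonzero_mult_div_cancel_right) simp
  then show "up a b N (Suc N) = b" unfolding up_def by simp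
  fix i
  show "up a b N i \<le> up a b N i" by simp
  have "(b - a) * real i \<le> (b - a) * real (Suc i)" using ab by (intro mult_left_mono) auto
  then show "up a b N i \<le> up a b N (Suc i)" unfolding up_def by (simp add: divide_right_mono)
qed

lemma up_step: "up a b N (Suc i) - up a b N i = (b - a) / real (Suc N)"
proof -
  have "(b - a) * real (Suc i) - (b - a) * real i = b - a" by (simp add: algebra_simps)
  then show ?thesis unfolding up_def by (simp add: diff_divide_distrib[symmetric] del: of_nat_Suc)
qed

lemma up_fine:
  assumes "a \<le> b" "(b - a) / real (Suc N) < \<delta>"
  shows "mfine \<delta> (Suc N) (up a b N)"
  using assms by (simp add: mfine_def up_step)

lemma up_small:
  assumes "a \<le> b" "\<delta> > 0"
  shows "\<exists>N0. \<forall>N\<ge>N0. (b - a) / real (Suc N) < \<delta>"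
proof -
  obtain N0 :: nat where N0: "(b - a) / \<delta> < real N0" using reals_Archimedean2 by blast
  show ?thesis
  proof (intro exI allI impI)
    fix N assume "N0 \<le> N"
    then have "(b - a) / \<delta> < real (Suc N)" using N0 by linarith
    then show "(b - a) / real (Suc N) < \<delta>" using assms by (simp add: field_simps)
  qed
qed

definition ucont :: "(real \<Rightarrow> real) \<Rightarrow> real \<Rightarrow> real \<Rightarrow> bool" where
  "ucont F a b \<longleftrightarrow> (\<forall>e>0. \<exists>\<delta>>0. \<forall>u\<in>{a..b}. \<forall>v\<in>{a..b}. \<bar>u - v\<bar> < \<delta> \<longrightarrow> \<bar>F u - F v\<bar> < e)"

lemma ucont_get:
  assumes "ucont F a b" "e > 0"
  obtains \<delta> where "\<delta> > 0" "\<And>u v. u \<in> {a..b} \<Longrightarrow> v \<in> {a..b} \<Longrightarrow> \<bar>u - v\<bar> < 2 * \<delta> \<Longrightarrow> \<bar>F u - F v\<bar> \<le> e"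
proof -
  obtain d where d: "d > 0" "\<forall>u\<in>{a..b}. \<forall>v\<in>{a..b}. \<bar>u - v\<bar> < d \<longrightarrow> \<bar>F u - F v\<bar> < e"
    using assms unfolding ucont_def by blast
  show ?thesis
  proof (rule that[of "d/2"])
    show "d/2 > 0" using d by simp
    fix u v assume uv: "u \<in> {a..b}" "v \<in> {a..b}" "\<bar>u - v\<bar> < 2 * (d/2)"
    then have "\<bar>u - v\<bar> < d" by simp
    then have "\<bar>F u - F v\<bar> < e" using d(2) uv(1,2) by blast
    then show "\<bar>F u - F v\<bar> \<le> e" by simp
  qed
qed

lemma rs_exists:
  fixes F h :: "real \<Rightarrow> real"
  assumes ab: "a \<le> b" and bv: "bvB h a b B" and uc: "ucont F a b"
  shows "\<exists>I. has_RS_integral F h a b I"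
proof -
  define K where "K = var h a b"
  have K0: "K \<ge> 0" unfolding K_def by (rule var_nonneg[OF bv ab])
  define s where "s N = rs F h (up a b N) (up a b N) (Suc N)" for N
  have close: "\<exists>\<delta>>0. \<forall>n x \<xi> m y \<eta>. tagged_partition_of a b n x \<xi> \<and> tagged_partition_of a b m y \<eta> \<and>
       mfine \<delta> n x \<and> mfine \<delta> m y \<longrightarrow> \<bar>rs F h x \<xi> n - rs F h y \<eta> m\<bar> < e" if e: "e > 0" for e
  proof -
    have e': "e / (K + 1) > 0" using e K0 by simp
    obtain \<delta> where \<delta>: "\<delta> > 0" "\<And>u v. u \<in> {a..b} \<Longrightarrow> v \<in> {a..b} \<Longrightarrow> \<bar>u - v\<bar> < 2 * \<delta> \<Longrightarrow> \<bar>F u - F v\<bar> \<le> e / (K + 1)"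
      using ucont_get[OF uc e'] by blast
    have "e / (K + 1) * K < e" using e K0 by (simp add: field_simps)
    show ?thesis
    proof (intro exI[of _ \<delta>] conjI allI impI \<delta>(1))
      fix n x \<xi> m y \<eta> assume H: "tagged_partition_of a b n x \<xi> \<and> tagged_partition_of a b m y \<eta> \<and> mfine \<delta> n x \<and> mfine \<delta> m y"
      have "\<bar>rs F h x \<xi> n - rs F h y \<eta> m\<bar> \<le> e / (K + 1) * var h a b"
        using H by (intro rs_cauchy[OF _ _ _ _ bv \<delta>(2) less_imp_le[OF e']]) auto
      then show "\<bar>rs F h x \<xi> n - rs F h y \<eta> m\<bar> < e"
        using \<open>e / (K + 1) * K < e\<close> unfolding K_def by linarith
    qed
  qed
  have "Cauchy s"
  proof (rule metric_CauchyI)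
    fix e :: real assume "e > 0"
    then obtain \<delta> where \<delta>: "\<delta> > 0" "\<forall>n x \<xi> m y \<eta>. tagged_partition_of a b n x \<xi> \<and> tagged_partition_of a b m y \<eta> \<and>
       mfine \<delta> n x \<and> mfine \<delta> m y \<longrightarrow> \<bar>rs F h x \<xi> n - rs F h y \<eta> m\<bar> < e" using close by blast
    obtain N0 where N0: "\<forall>N\<ge>N0. (b - a) / real (Suc N) < \<delta>" using up_small[OF ab \<delta>(1)] by blast
    show "\<exists>M. \<forall>m\<ge>M. \<forall>n\<ge>M. dist (s m) (s n) < e"
      using \<delta>(2) N0 up_tagged[OF ab] up_fine[OF ab] unfolding s_def dist_real_def by blast
  qed
  then obtain I where I: "s \<longlonglongrightarrow> I" using Cauchy_convergent_iff convergent_def by blast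
  have "has_RS_integral F h a b I"
    unfolding has_RS_integral_def
  proof (intro allI impI)
    fix e :: real assume e: "e > 0"
    then obtain \<delta> where \<delta>: "\<delta> > 0" "\<forall>n x \<xi> m y \<eta>. tagged_partition_of a b n x \<xi> \<and> tagged_partition_of a b m y \<eta> \<and>
       mfine \<delta> n x \<and> mfine \<delta> m y \<longrightarrow> \<bar>rs F h x \<xi> n - rs F h y \<eta> m\<bar> < e/2" using close[of "e/2"] by auto
    obtain N0 where N0: "\<forall>N\<ge>N0. (b - a) / real (Suc N) < \<delta>" using up_small[OF ab \<delta>(1)] by blast
    obtain N1 where N1: "\<forall>N\<ge>N1. dist (s N) I < e/2" using I e unfolding lim_sequentially
      by (meson half_gt_zero)
    define N where "N = max N0 N1"
    have sN: "\<bar>s N - I\<bar> < e/2" using N1 by (simp add: N_def dist_real_def)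
    have fN: "mfine \<delta> (Suc N) (up a b N)" using N0 up_fine[OF ab] by (simp add: N_def)
    show "\<exists>\<delta>>0. \<forall>n x xi. tagged_partition_of a b n x xi \<and> (\<forall>i<n. x (Suc i) - x i < \<delta>) \<longrightarrow>
        \<bar>(\<Sum>i<n. F (xi i) * (h (x (Suc i)) - h (x i))) - I\<bar> < e"
    proof (intro exI[of _ \<delta>] conjI allI impI \<delta>(1))
      fix n x xi assume H: "tagged_partition_of a b n x xi \<and> (\<forall>i<n. x (Suc i) - x i < \<delta>)"
      then have "\<bar>rs F h x xi n - s N\<bar> < e/2"
        using \<delta>(2) fN up_tagged[OF ab, of N] unfolding s_def mfine_def by blast
      then show "\<bar>(\<Sum>i<n. F (xi i) * (h (x (Suc i)) - h (x i))) - I\<bar> < e"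
        using sN unfolding rs_def by linarith
    qed
  qed
  then show ?thesis by blast
qed

lemma has_RS_rs:
  assumes "has_RS_integral F h a b I" "e > 0"
  obtains \<delta> where "\<delta> > 0" "\<And>n x \<xi>. tagged_partition_of a b n x \<xi> \<Longrightarrow> mfine \<delta> n x \<Longrightarrow> \<bar>rs F h x \<xi> n - I\<bar> < e"
  using assms unfolding has_RS_integral_def rs_def mfine_def by metis

lemma RS_unique:
  assumes ab: "a \<le> b" and I: "has_RS_integral F h a b I" and J: "has_RS_integral F h a b J"
  shows "I = J"
proof (rule ccontr)
  assume "I \<noteq> J"
  then have e: "\<bar>I - J\<bar> / 2 > 0" by simp
  obtain d1 where d1: "d1 > 0" "\<And>n x \<xi>. tagged_partition_of a b n x \<xi> \<Longrightarrow> mfine d1 n x \<Longrightarrow> \<bar>rs F h x \<xi> n - I\<bar> < \<bar>I - J\<bar> / 2"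
    using has_RS_rs[OF I e] by blast
  obtain d2 where d2: "d2 > 0" "\<And>n x \<xi>. tagged_partition_of a b n x \<xi> \<Longrightarrow> mfine d2 n x \<Longrightarrow> \<bar>rs F h x \<xi> n - J\<bar> < \<bar>I - J\<bar> / 2"
    using has_RS_rs[OF J e] by blast
  obtain N0 where N0: "\<forall>N\<ge>N0. (b - a) / real (Suc N) < min d1 d2" using up_small[OF ab, of "min d1 d2"] d1(1) d2(1) by auto
  then have N0': "(b - a) / real (Suc N0) < d1" "(b - a) / real (Suc N0) < d2" by auto
  define r where "r = rs F h (up a b N0) (up a b N0) (Suc N0)"
  have t: "tagged_partition_of a b (Suc N0) (up a b N0) (up a b N0)" by (rule up_tagged[OF ab])
  have "\<bar>r - I\<bar> < \<bar>I - J\<bar> / 2" unfolding r_def by (rule d1(2)[OF t up_fine[OF ab N0'(1)]])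
  moreover have "\<bar>r - J\<bar> < \<bar>I - J\<bar> / 2" unfolding r_def by (rule d2(2)[OF t up_fine[OF ab N0'(2)]])
  ultimately show False by (auto simp: abs_less_iff abs_if split: if_splits)
qed

lemma RS_eq:
  assumes "a \<le> b" "has_RS_integral F h a b I"
  shows "RS_integral F h a b = I"
  unfolding RS_integral_def using RS_unique[OF assms(1)] assms(2) by blast


lemma tagged_cat:
  assumes "tagged_partition_of a c n x \<xi>" "tagged_partition_of c d m y \<eta>"
  shows "tagged_partition_of a d (n+m) (cat n x y) (catt n \<xi> \<eta>)"
proof -
  have p: "prt a d (n+m) (cat n x y)" using prt_cat[OF tp_prt[OF assms(1)] tp_prt[OF assms(2)]] .
  have c0: "cat n x y 0 = a" "cat n x y (n+m) = d" using p unfolding prt_def by simp_all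
  have tg: "\<forall>i<n+m. cat n x y i \<le> catt n \<xi> \<eta> i \<and> catt n \<xi> \<eta> i \<le> cat n x y (Suc i)"
  proof (intro allI impI)
    fix i assume i: "i < n + m"
    show "cat n x y i \<le> catt n \<xi> \<eta> i \<and> catt n \<xi> \<eta> i \<le> cat n x y (Suc i)"
    proof (cases "i < n")
      case True
      have "x i \<le> \<xi> i \<and> \<xi> i \<le> x (Suc i)" using assms(1) True unfolding tagged_partition_of_def by blast
      moreover have "cat n x y i = x i" "cat n x y (Suc i) = x (Suc i)" "catt n \<xi> \<eta> i = \<xi> i"
        using True by (simp_all add: cat_def catt_def)
      ultimately show ?thesis by simp
    next
      case False
      then obtain j where j: "i = n + j" "j < m" using i by (metis add_diff_inverse_nat nat_add_left_cancel_less)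
      have xy: "x n = y 0" using assms unfolding tagged_partition_of_def by simp
      have "y j \<le> \<eta> j \<and> \<eta> j \<le> y (Suc j)" using assms(2) j(2) unfolding tagged_partition_of_def by blast
      moreover have "cat n x y (Suc i) = y (Suc j)" using j(1) by (simp add: cat_def)
      moreover have "catt n \<xi> \<eta> i = \<eta> j" using j(1) by (simp add: catt_def)
      moreover have "cat n x y i = y j" using j(1) xy by (cases j) (simp_all add: cat_def)
      ultimately show ?thesis by simp
    qed
  qed
  show ?thesis unfolding tagged_partition_of_def by (intro conjI c0(1) c0(2) tg)
qed

lemma rs_cat:
  assumes "tagged_partition_of a c n x \<xi>" "tagged_partition_of c d m y \<eta>"
  shows "rs F h (cat n x y) (catt n \<xi> \<eta>) (n+m) = rs F h x \<xi> n + rs F h y \<eta> m"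
proof -
  have "x n = y 0" using assms unfolding tagged_partition_of_def by simp
  from sum_cat[where G="\<lambda>p q r. F r * (h q - h p)" and x=x and n=n and y=y and m=m and \<xi>=\<xi> and \<eta>=\<eta>, OF this]
  show ?thesis unfolding rs_def .
qed

lemma mfine_cat:
  assumes "mfine \<delta> n x" "mfine \<delta> m y" "x n = y 0"
  shows "mfine \<delta> (n+m) (cat n x y)"
  unfolding mfine_def
proof (intro allI impI)
  fix i assume i: "i < n + m"
  show "cat n x y (Suc i) - cat n x y i < \<delta>"
  proof (cases "i < n")
    case True then show ?thesis using assms(1) by (auto simp: cat_def mfine_def)
  next
    case False
    then obtain j where j: "i = n + j" "j < m" using i by (metis add_diff_inverse_nat nat_add_left_cancel_less)
    have "y (Suc j) - y j < \<delta>" using assms(2) j(2) by (simp add: mfine_def)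
    moreover have "cat n x y (Suc i) = y (Suc j)" using j(1) by (simp add: cat_def)
    moreover have "cat n x y i = y j" using j(1) assms(3) by (cases j) (simp_all add: cat_def)
    ultimately show ?thesis by simp
  qed
qed



lemma le_by_eps:
  fixes x M :: real
  assumes "\<And>e. e > 0 \<Longrightarrow> x < M + e"
  shows "x \<le> M"
proof (rule ccontr)
  assume "\<not> x \<le> M"
  then have "x - M > 0" by simp
  from assms[OF this] show False by simp
qed

lemma fact_frac: "(A::real) / fact k * B = real (Suc k) * A * B / fact (Suc k)"
proof -
  have f: "fact (Suc k) = real (Suc k) * (fact k::real)" by simp
  have "real (Suc k) * A * B / fact (Suc k) = (real (Suc k) * (A * B)) / (real (Suc k) * fact k)"
    unfolding f by (simp add: mult.assoc)
  also have "\<dots> = A * B / fact k" by (rule mult_divide_mult_cancel_left) simp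
  finally show ?thesis by simp
qed

lemma pow_step:
  fixes u v :: real
  assumes "0 \<le> u" "u \<le> v"
  shows "real (Suc k) * u ^ k * (v - u) \<le> v ^ Suc k - u ^ Suc k"
proof -
  have "v ^ Suc k - u ^ Suc k = (v - u) * (\<Sum>i<Suc k. u ^ (Suc k - Suc i) * v ^ i)"
    by (rule power_diff_sumr2)
  moreover have "(\<Sum>i<Suc k. u ^ (Suc k - Suc i) * v ^ i) \<ge> (\<Sum>i<Suc k. u ^ k)"
  proof (rule sum_mono)
    fix i assume i: "i \<in> {..<Suc k}"
    have "u ^ (Suc k - Suc i) * u ^ i \<le> u ^ (Suc k - Suc i) * v ^ i"
      using assms by (intro mult_left_mono power_mono) auto
    moreover have "u ^ (Suc k - Suc i) * u ^ i = u ^ k"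
      using i by (simp add: power_add[symmetric])
    ultimately show "u ^ k \<le> u ^ (Suc k - Suc i) * v ^ i" by simp
  qed
  ultimately show ?thesis using assms
    by (simp add: mult_left_mono mult.commute mult.left_commute)
qed

lemma rs_abs_bound:
  assumes "tagged_partition_of c d n y \<eta>" "\<And>i. i < n \<Longrightarrow> \<bar>F (\<eta> i)\<bar> \<le> M"
  shows "\<bar>rs F h y \<eta> n\<bar> \<le> M * vsum h y n"
proof -
  have "\<bar>rs F h y \<eta> n\<bar> \<le> (\<Sum>i<n. \<bar>F (\<eta> i) * (h (y (Suc i)) - h (y i))\<bar>)"
    unfolding rs_def by (rule sum_abs)
  also have "\<dots> \<le> (\<Sum>i<n. M * \<bar>h (y (Suc i)) - h (y i)\<bar>)"
    using assms(2) by (intro sum_mono) (auto simp: abs_mult mult_right_mono)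
  finally show ?thesis by (simp add: vsum_def sum_distrib_left)
qed

lemma left_bound:
  fixes F h W :: "real \<Rightarrow> real"
  assumes at: "a \<le> t" and I: "has_RS_integral F h a t I"
    and W0: "\<And>u. u \<in> {a..t} \<Longrightarrow> 0 \<le> W u"
    and Wh: "\<And>x y. a \<le> x \<Longrightarrow> x \<le> y \<Longrightarrow> y \<le> t \<Longrightarrow> \<bar>h y - h x\<bar> \<le> W y - W x"
    and F: "\<And>u. u \<in> {a..t} \<Longrightarrow> \<bar>F u\<bar> \<le> W u ^ k / fact k"
  shows "\<bar>I\<bar> \<le> W t ^ Suc k / fact (Suc k)"
proof (rule le_by_eps)
  fix e :: real assume e: "e > 0"
  obtain \<delta> where \<delta>: "\<delta> > 0" "\<And>n x \<xi>. tagged_partition_of a t n x \<xi> \<Longrightarrow> mfine \<delta> n x \<Longrightarrow> \<bar>rs F h x \<xi> n - I\<bar> < e"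
    using has_RS_rs[OF I e] by blast
  obtain N0 where N0: "\<forall>N\<ge>N0. (t - a) / real (Suc N) < \<delta>" using up_small[OF at \<delta>(1)] by blast
  define x where "x = up a t N0"
  have tp: "tagged_partition_of a t (Suc N0) x x" unfolding x_def by (rule up_tagged[OF at])
  have close: "\<bar>rs F h x x (Suc N0) - I\<bar> < e"
    using \<delta>(2)[OF tp] up_fine[OF at] N0 unfolding x_def by blast
  have xr: "a \<le> x i \<and> x i \<le> t" if "i \<le> Suc N0" for i using prt_range[OF tp_prt[OF tp] that] by auto
  have xm: "x i \<le> x (Suc i)" if "i < Suc N0" for i using tp that unfolding tagged_partition_of_def by auto
  have "\<bar>rs F h x x (Suc N0)\<bar> \<le> (\<Sum>i<Suc N0. \<bar>F (x i) * (h (x (Suc i)) - h (x i))\<bar>)"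
    unfolding rs_def by (rule sum_abs)
  also have "\<dots> \<le> (\<Sum>i<Suc N0. (W (x (Suc i)) ^ Suc k - W (x i) ^ Suc k) / fact (Suc k))"
  proof (rule sum_mono)
    fix i assume i: "i \<in> {..<Suc N0}"
    have r: "a \<le> x i" "x i \<le> x (Suc i)" "x (Suc i) \<le> t" using xr[of i] xr[of "Suc i"] xm[of i] i by auto
    have w0: "0 \<le> W (x i)" using W0 r by auto
    have dh: "\<bar>h (x (Suc i)) - h (x i)\<bar> \<le> W (x (Suc i)) - W (x i)" using Wh r by auto
    have "\<bar>F (x i) * (h (x (Suc i)) - h (x i))\<bar> \<le> W (x i) ^ k / fact k * (W (x (Suc i)) - W (x i))"
      unfolding abs_mult using F[of "x i"] r dh by (intro mult_mono) auto
    also have "\<dots> = real (Suc k) * W (x i) ^ k * (W (x (Suc i)) - W (x i)) / fact (Suc k)"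
      by (rule fact_frac)
    also have "\<dots> \<le> (W (x (Suc i)) ^ Suc k - W (x i) ^ Suc k) / fact (Suc k)"
      using pow_step[OF w0, of "W (x (Suc i))" k] dh by (intro divide_right_mono) auto
    finally show "\<bar>F (x i) * (h (x (Suc i)) - h (x i))\<bar> \<le> (W (x (Suc i)) ^ Suc k - W (x i) ^ Suc k) / fact (Suc k)" .
  qed
  also have "\<dots> = (\<Sum>i<Suc N0. W (x (Suc i)) ^ Suc k - W (x i) ^ Suc k) / fact (Suc k)"
    by (simp only: sum_divide_distrib)
  also have "\<dots> = (W (x (Suc N0)) ^ Suc k - W (x 0) ^ Suc k) / fact (Suc k)"
    using sum_lessThan_telescope[where f="\<lambda>j. W (x j) ^ Suc k" and m="Suc N0"] by simp
  also have "\<dots> \<le> W t ^ Suc k / fact (Suc k)"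
  proof -
    have e0: "x 0 = a" "x (Suc N0) = t" using tp unfolding tagged_partition_of_def by auto
    have "0 \<le> W (x 0) ^ Suc k" using W0[of a] at e0 by simp
    then show ?thesis using e0 by (intro divide_right_mono) auto
  qed
  finally show "\<bar>I\<bar> < W t ^ Suc k / fact (Suc k) + e" using close by linarith
qed

lemma lip_bound:
  fixes F h :: "real \<Rightarrow> real"
  assumes at: "a \<le> t" "t \<le> t'" and I: "has_RS_integral F h a t I" and I': "has_RS_integral F h a t' I'"
    and F: "\<And>u. u \<in> {a..t'} \<Longrightarrow> \<bar>F u\<bar> \<le> M"
    and V: "\<And>n y. prt t t' n y \<Longrightarrow> vsum h y n \<le> L"
  shows "\<bar>I' - I\<bar> \<le> M * L"
proof (rule le_by_eps)
  fix e :: real assume e: "e > 0"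
  then have e2: "e/2 > 0" by simp
  obtain d1 where d1: "d1 > 0" "\<And>n x \<xi>. tagged_partition_of a t n x \<xi> \<Longrightarrow> mfine d1 n x \<Longrightarrow> \<bar>rs F h x \<xi> n - I\<bar> < e/2"
    using has_RS_rs[OF I e2] by blast
  obtain d2 where d2: "d2 > 0" "\<And>n x \<xi>. tagged_partition_of a t' n x \<xi> \<Longrightarrow> mfine d2 n x \<Longrightarrow> \<bar>rs F h x \<xi> n - I'\<bar> < e/2"
    using has_RS_rs[OF I' e2] by blast
  define \<delta> where "\<delta> = min d1 d2"
  have \<delta>: "\<delta> > 0" using d1 d2 by (simp add: \<delta>_def)
  obtain N1 where N1: "\<forall>N\<ge>N1. (t - a) / real (Suc N) < \<delta>" using up_small[OF at(1) \<delta>] by blast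
  obtain N2 where N2: "\<forall>N\<ge>N2. (t' - t) / real (Suc N) < \<delta>" using up_small[OF at(2) \<delta>] by blast
  define N where "N = max N1 N2"
  define x where "x = up a t N"
  define y where "y = up t t' N"
  have tx: "tagged_partition_of a t (Suc N) x x" unfolding x_def by (rule up_tagged[OF at(1)])
  have ty: "tagged_partition_of t t' (Suc N) y y" unfolding y_def by (rule up_tagged[OF at(2)])
  have fx: "mfine \<delta> (Suc N) x" unfolding x_def using up_fine[OF at(1)] N1 by (simp add: N_def)
  have fy: "mfine \<delta> (Suc N) y" unfolding y_def using up_fine[OF at(2)] N2 by (simp add: N_def)
  have xy: "x (Suc N) = y 0" using tx ty unfolding tagged_partition_of_def by simp
  have tc: "tagged_partition_of a t' (Suc N + Suc N) (cat (Suc N) x y) (catt (Suc N) x y)"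
    by (rule tagged_cat[OF tx ty])
  have fc: "mfine \<delta> (Suc N + Suc N) (cat (Suc N) x y)" by (rule mfine_cat[OF fx fy xy])
  have fd1: "mfine d1 (Suc N) x" using fx unfolding mfine_def \<delta>_def by auto
  have fd2: "mfine d2 (Suc N + Suc N) (cat (Suc N) x y)" using fc unfolding mfine_def \<delta>_def by auto
  have c1: "\<bar>rs F h x x (Suc N) - I\<bar> < e/2" by (rule d1(2)[OF tx fd1])
  have c2: "\<bar>rs F h (cat (Suc N) x y) (catt (Suc N) x y) (Suc N + Suc N) - I'\<bar> < e/2" by (rule d2(2)[OF tc fd2])
  have sp: "rs F h (cat (Suc N) x y) (catt (Suc N) x y) (Suc N + Suc N) = rs F h x x (Suc N) + rs F h y y (Suc N)"
    by (rule rs_cat[OF tx ty])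
  have "\<bar>rs F h y y (Suc N)\<bar> \<le> M * vsum h y (Suc N)"
  proof (rule rs_abs_bound[OF ty])
    fix i assume "i < Suc N"
    then have "t \<le> y i" "y i \<le> t'" using prt_range[OF tp_prt[OF ty], of i] by auto
    then show "\<bar>F (y i)\<bar> \<le> M" using F at by auto
  qed
  moreover have "\<bar>F a\<bar> \<le> M" using F at by auto
  then have "M \<ge> 0" by (meson abs_ge_zero order_trans)
  then have "M * vsum h y (Suc N) \<le> M * L" using V[OF tp_prt[OF ty]] by (simp add: mult_left_mono)
  ultimately have "\<bar>rs F h y y (Suc N)\<bar> \<le> M * L" by linarith
  then have R: "rs F h y y (Suc N) \<le> M * L" "- rs F h y y (Suc N) \<le> M * L" by (simp_all only: abs_le_iff)
  note A = conjunct1[OF abs_less_iff[THEN iffD1, OF c1]] conjunct2[OF abs_less_iff[THEN iffD1, OF c1]]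
  note B = conjunct1[OF abs_less_iff[THEN iffD1, OF c2]] conjunct2[OF abs_less_iff[THEN iffD1, OF c2]]
  have "I' - I < M * L + e" "-(I' - I) < M * L + e" using A B R sp by linarith+
  then show "\<bar>I' - I\<bar> < M * L + e" by (simp add: abs_less_iff)
qed



context
  fixes \<gamma> :: "real \<Rightarrow> 'v::euclidean_space" and a b B :: real
  assumes ab: "a \<le> b" and cont: "continuous_on {a..b} \<gamma>" and bv: "bvB \<gamma> a b B"
begin

lemma W_diff:
  assumes "a \<le> x" "x \<le> y" "y \<le> b" "prt x y n P"
  shows "vsum \<gamma> P n \<le> var \<gamma> a y - var \<gamma> a x"
proof -
  have "vsum \<gamma> P n \<le> var \<gamma> x y"
    by (rule var_upper[OF bvB_subI[OF bv] _ assms(4)]) (use assms in auto)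
  moreover have "var \<gamma> a x + var \<gamma> x y \<le> var \<gamma> a y"
    by (rule var_superadd[OF bvB_subI[OF bv]]) (use assms in auto)
  ultimately show ?thesis by linarith
qed

lemma W_step:
  assumes "a \<le> x" "x \<le> y" "y \<le> b"
  shows "norm (\<gamma> y - \<gamma> x) \<le> var \<gamma> a y - var \<gamma> a x"
  using W_diff[OF assms prt_one[OF assms(2)]] vsum_one[of \<gamma> x y] by simp

lemma W_nonneg: "t \<in> {a..b} \<Longrightarrow> 0 \<le> var \<gamma> a t"
  by (rule var_nonneg[OF bvB_subI[OF bv]]) auto

lemma W_mono: "a \<le> x \<Longrightarrow> x \<le> y \<Longrightarrow> y \<le> b \<Longrightarrow> var \<gamma> a x \<le> var \<gamma> a y"
  using W_step[of x y] norm_ge_zero[of "\<gamma> y - \<gamma> x"] by linarith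

lemma inner_step:
  assumes "e \<in> Basis"
  shows "\<bar>\<gamma> y \<bullet> e - \<gamma> x \<bullet> e\<bar> \<le> norm (\<gamma> y - \<gamma> x)"
  using Basis_le_norm[OF assms, of "\<gamma> y - \<gamma> x"] by (simp add: inner_diff_left)

lemma vsum_inner:
  assumes "e \<in> Basis"
  shows "vsum (\<lambda>u. \<gamma> u \<bullet> e) P n \<le> vsum \<gamma> P n"
  unfolding vsum_def using inner_step[OF assms] by (intro sum_mono) simp

lemma sig_bound:
  "set w \<subseteq> Basis \<Longrightarrow> (\<forall>t\<in>{a..b}. \<bar>sig_rev \<gamma> a t w\<bar> \<le> var \<gamma> a t ^ length w / fact (length w))
      \<and> ucont (\<lambda>t. sig_rev \<gamma> a t w) a b"
proof (induction w)
  case Nil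
  show ?case by (simp add: ucont_def)
next
  case (Cons e w)
  have e: "e \<in> Basis" and wB: "set w \<subseteq> Basis" using Cons.prems by auto
  define F where "F = (\<lambda>u. sig_rev \<gamma> a u w)"
  define h where "h = (\<lambda>u. \<gamma> u \<bullet> e)"
  define k where "k = length w"
  define W where "W = (\<lambda>t. var \<gamma> a t)"
  have Fb: "\<And>u. u \<in> {a..b} \<Longrightarrow> \<bar>F u\<bar> \<le> W u ^ k / fact k" and Fuc: "ucont F a b"
    using Cons.IH[OF wB] unfolding F_def k_def W_def by auto
  have hasI: "has_RS_integral F h a t (sig_rev \<gamma> a t (e # w))" if t: "t \<in> {a..b}" for t
  proof -
    have at: "a \<le> t" using t by simp
    have bvt: "bvB h a t B" unfolding bvB_def
    proof (intro allI impI)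
      fix n P assume P: "prt a t n P"
      have "vsum h P n \<le> vsum \<gamma> P n" unfolding h_def by (rule vsum_inner[OF e])
      also have "\<dots> \<le> B" by (rule bvB_sub[OF bv order_refl at _ P]) (use t in auto)
      finally show "vsum h P n \<le> B" .
    qed
    have uct: "ucont F a t" using Fuc t unfolding ucont_def by (meson atLeastAtMost_iff order_trans)
    obtain I where I: "has_RS_integral F h a t I" using rs_exists[OF at bvt uct] by blast
    have "sig_rev \<gamma> a t (e # w) = RS_integral F h a t" by (simp add: F_def h_def)
    also have "\<dots> = I" by (rule RS_eq[OF at I])
    finally show ?thesis using I by simp
  qed
  have Wh: "\<bar>h y - h x\<bar> \<le> W y - W x" if "a \<le> x" "x \<le> y" "y \<le> b" for x y
    using inner_step[OF e, of y x] W_step[OF that] unfolding h_def W_def by linarith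
  have bound: "\<bar>sig_rev \<gamma> a t (e # w)\<bar> \<le> W t ^ Suc k / fact (Suc k)" if t: "t \<in> {a..b}" for t
  proof (rule left_bound[OF _ hasI[OF t]])
    show "a \<le> t" using t by simp
    show "\<And>u. u \<in> {a..t} \<Longrightarrow> 0 \<le> W u" unfolding W_def using t by (intro W_nonneg) auto
    show "\<And>x y. a \<le> x \<Longrightarrow> x \<le> y \<Longrightarrow> y \<le> t \<Longrightarrow> \<bar>h y - h x\<bar> \<le> W y - W x" using Wh t by auto
    show "\<And>u. u \<in> {a..t} \<Longrightarrow> \<bar>F u\<bar> \<le> W u ^ k / fact k" using Fb t by auto
  qed
  define M where "M = W b ^ k / fact k"
  have M0: "M \<ge> 0" unfolding M_def W_def using W_nonneg[of b] ab by simp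
  have FM: "\<bar>F u\<bar> \<le> M" if "u \<in> {a..b}" for u
  proof -
    have "W u ^ k \<le> W b ^ k" unfolding W_def using that W_nonneg[of u] W_mono[of u b] by (intro power_mono) auto
    then have "W u ^ k / fact k \<le> M" unfolding M_def by (intro divide_right_mono) auto
    then show ?thesis using Fb[OF that] by linarith
  qed
  have lip: "\<bar>sig_rev \<gamma> a v (e # w) - sig_rev \<gamma> a u (e # w)\<bar> \<le> M * (W v - W u)"
    if uv: "a \<le> u" "u \<le> v" "v \<le> b" for u v
  proof (rule lip_bound[OF uv(1,2) hasI hasI])
    show "u \<in> {a..b}" "v \<in> {a..b}" using uv by auto
    show "\<And>x. x \<in> {a..v} \<Longrightarrow> \<bar>F x\<bar> \<le> M" using FM uv by auto
    fix n y assume "prt u v n y"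
    then have "vsum \<gamma> y n \<le> W v - W u" unfolding W_def by (rule W_diff[OF uv])
    moreover have "vsum h y n \<le> vsum \<gamma> y n" unfolding h_def by (rule vsum_inner[OF e])
    ultimately show "vsum h y n \<le> W v - W u" by linarith
  qed
  have uc: "ucont (\<lambda>t. sig_rev \<gamma> a t (e # w)) a b"
    unfolding ucont_def
  proof (intro allI impI)
    fix \<epsilon> :: real assume \<epsilon>: "\<epsilon> > 0"
    then have \<epsilon>': "\<epsilon> / (M + 1) > 0" using M0 by simp
    obtain \<delta> where \<delta>: "\<delta> > 0" "\<forall>t t'. a \<le> t \<longrightarrow> t \<le> t' \<longrightarrow> t' \<le> b \<longrightarrow> t' - t < \<delta> \<longrightarrow> W t' - W t < \<epsilon> / (M + 1)"
      using var_ucont[OF bv ab cont \<epsilon>'] unfolding W_def by blast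
    have Me: "M * (\<epsilon> / (M + 1)) < \<epsilon>" using M0 \<epsilon> by (simp add: field_simps)
    have key: "\<bar>sig_rev \<gamma> a v (e # w) - sig_rev \<gamma> a u (e # w)\<bar> < \<epsilon>"
      if uv: "a \<le> u" "u \<le> v" "v \<le> b" "v - u < \<delta>" for u v
    proof -
      have "W v - W u < \<epsilon> / (M + 1)" using \<delta>(2) uv by blast
      then have "M * (W v - W u) \<le> M * (\<epsilon> / (M + 1))" using M0 by (intro mult_left_mono) auto
      then show ?thesis using lip[OF uv(1-3)] Me by linarith
    qed
    show "\<exists>\<delta>>0. \<forall>u\<in>{a..b}. \<forall>v\<in>{a..b}. \<bar>u - v\<bar> < \<delta> \<longrightarrow> \<bar>sig_rev \<gamma> a u (e # w) - sig_rev \<gamma> a v (e # w)\<bar> < \<epsilon>"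
    proof (intro exI[of _ \<delta>] conjI ballI impI \<delta>(1))
      fix u v assume u: "u \<in> {a..b}" and v: "v \<in> {a..b}" and d: "\<bar>u - v\<bar> < \<delta>"
      show "\<bar>sig_rev \<gamma> a u (e # w) - sig_rev \<gamma> a v (e # w)\<bar> < \<epsilon>"
      proof (cases "u \<le> v")
        case True then show ?thesis using key[of u v] u v d by (simp add: abs_minus_commute)
      next
        case False then show ?thesis using key[of v u] u v d by simp
      qed
    qed
  qed
  show ?case using bound uc by (simp add: k_def W_def)
qed

lemma sig_coeff_bound:
  assumes "set w \<subseteq> Basis" "t \<in> {a..b}"
  shows "\<bar>sig_coeff \<gamma> a t w\<bar> \<le> var \<gamma> a b ^ length w / fact (length w)"
proof -
  have "\<bar>sig_coeff \<gamma> a t w\<bar> \<le> var \<gamma> a t ^ length w / fact (length w)"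
    using sig_bound[of "rev w"] assms unfolding sig_coeff_def by auto
  also have "\<dots> \<le> var \<gamma> a b ^ length w / fact (length w)"
    using assms(2) W_nonneg[of t] W_mono[of t b] by (intro divide_right_mono power_mono) auto
  finally show ?thesis .
qed

end



lemma prod_int:
  fixes u f :: "real \<Rightarrow> 'a::{euclidean_space, real_normed_field}"
  assumes f: "f absolutely_integrable_on S" and S: "S \<in> sets lebesgue"
    and u: "continuous_on S u" and ub: "\<And>x. x \<in> S \<Longrightarrow> norm (u x) \<le> 1"
  shows "(\<lambda>x. u x * f x) integrable_on S"
proof -
  have "bounded (u ` S)" using ub unfolding bounded_iff by blast
  then have "(\<lambda>x. u x * f x) absolutely_integrable_on S"
    using absolutely_integrable_bounded_measurable_product[OF bilinear_times continuous_imp_measurable_on_sets_lebesgue[OF u S] S _ f]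
    by blast
  then show ?thesis using absolutely_integrable_on_def by blast
qed

lemma series_integral:
  fixes u :: "nat \<Rightarrow> real \<Rightarrow> 'a::{euclidean_space, real_normed_field}" and f :: "real \<Rightarrow> 'a" and c :: "nat \<Rightarrow> real"
  assumes cs: "summable (\<lambda>k. \<bar>c k\<bar>)"
    and ui: "\<And>k. (\<lambda>x. u k x * f x) integrable_on S"
    and ub: "\<And>k x. x \<in> S \<Longrightarrow> norm (u k x) \<le> 1"
    and fi: "f absolutely_integrable_on S"
  shows "(\<lambda>k. of_real (c k) * integral S (\<lambda>x. u k x * f x)) sums integral S (\<lambda>x. (\<Sum>k. of_real (c k) * u k x) * f x)"
proof -
  define C where "C = (\<Sum>k. \<bar>c k\<bar>)"
  define fN where "fN N x = (\<Sum>k<N. of_real (c k) * u k x) * f x" for N x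
  have nb: "norm (of_real (c k) * u k x) \<le> \<bar>c k\<bar>" if "x \<in> S" for k x
    using ub[OF that, of k] by (simp add: norm_mult mult_left_le)
  have sx: "summable (\<lambda>k. of_real (c k) * u k x)" if "x \<in> S" for x
    by (rule summable_comparison_test[OF _ cs]) (use nb[OF that] in auto)
  have fN_eq: "fN N x = (\<Sum>k<N. of_real (c k) * (u k x * f x))" for N x
    unfolding fN_def by (simp add: sum_distrib_right mult.assoc)
  have fN_int: "fN N integrable_on S" for N
    unfolding fN_eq by (intro integrable_sum integrable_on_mult_right ui) auto
  have fN_integral: "integral S (fN N) = (\<Sum>k<N. of_real (c k) * integral S (\<lambda>x. u k x * f x))" for N
    unfolding fN_eq by (subst integral_sum) (auto intro: integrable_on_mult_right ui)
  have h_int: "(\<lambda>x. C * norm (f x)) integrable_on S"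
    using fi unfolding absolutely_integrable_on_def by (intro integrable_on_mult_right) auto
  have bound: "norm (fN N x) \<le> C * norm (f x)" if "x \<in> S" for N x
  proof -
    have "norm (\<Sum>k<N. of_real (c k) * u k x) \<le> (\<Sum>k<N. \<bar>c k\<bar>)"
      by (rule order_trans[OF norm_sum sum_mono]) (use nb[OF that] in auto)
    also have "\<dots> \<le> C" unfolding C_def by (rule sum_le_suminf[OF cs]) auto
    finally have "norm (\<Sum>k<N. of_real (c k) * u k x) \<le> C" .
    then show ?thesis unfolding fN_def norm_mult by (intro mult_right_mono) auto
  qed
  have conv: "(\<lambda>N. fN N x) \<longlonglongrightarrow> (\<Sum>k. of_real (c k) * u k x) * f x" if "x \<in> S" for x
    unfolding fN_def by (intro tendsto_mult_right summable_LIMSEQ sx that)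
  have "(\<lambda>N. integral S (fN N)) \<longlonglongrightarrow> integral S (\<lambda>x. (\<Sum>k. of_real (c k) * u k x) * f x)"
    by (rule dominated_convergence(2)[OF fN_int h_int bound conv])
  then show ?thesis unfolding sums_def fN_integral .
qed

context
  fixes \<gamma> \<sigma> :: "real \<Rightarrow> 'v::euclidean_space" and a b s t :: real
  assumes ab: "a \<le> b"
    and c1: "continuous_on {a..b} \<gamma>" and b1: "bounded_variation_on a b \<gamma>"
    and c2: "continuous_on {a..b} \<sigma>" and b2: "bounded_variation_on a b \<sigma>"
    and s: "s \<in> {a..b}" and t: "t \<in> {a..b}"
begin

lemma sig_ip_bound:
  "\<bar>sig_ip \<gamma> \<sigma> a k s t\<bar> \<le> (real DIM('v) * var \<gamma> a b * var \<sigma> a b) ^ k / fact k"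
proof -
  obtain B1 where B1: "bvB \<gamma> a b B1" using b1 unfolding bounded_variation_on_def bvB_def prt_def vsum_def by blast
  obtain B2 where B2: "bvB \<sigma> a b B2" using b2 unfolding bounded_variation_on_def bvB_def prt_def vsum_def by blast
  define A1 where "A1 = var \<gamma> a b"
  define A2 where "A2 = var \<sigma> a b"
  have A0: "0 \<le> A1" "0 \<le> A2" unfolding A1_def A2_def using var_nonneg[OF B1 ab] var_nonneg[OF B2 ab] by auto
  have fin: "finite (words k :: 'v list set)" unfolding words_def by (rule finite_lists_length_eq) simp
  have card: "card (words k :: 'v list set) = DIM('v) ^ k" unfolding words_def by (rule card_lists_length_eq) simp
  have "\<bar>sig_ip \<gamma> \<sigma> a k s t\<bar> \<le> (\<Sum>w\<in>words k. \<bar>sig_coeff \<gamma> a s w * sig_coeff \<sigma> a t w\<bar>)"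
    unfolding sig_ip_def by (rule sum_abs)
  also have "\<dots> \<le> (\<Sum>w\<in>(words k :: 'v list set). (A1 ^ k / fact k) * (A2 ^ k / fact k))"
  proof (rule sum_mono)
    fix w :: "'v list" assume w: "w \<in> words k"
    then have wB: "set w \<subseteq> Basis" and wl: "length w = k" unfolding words_def by auto
    have "\<bar>sig_coeff \<gamma> a s w\<bar> \<le> A1 ^ k / fact k"
      using sig_coeff_bound[OF ab c1 B1 wB s] wl unfolding A1_def by simp
    moreover have "\<bar>sig_coeff \<sigma> a t w\<bar> \<le> A2 ^ k / fact k"
      using sig_coeff_bound[OF ab c2 B2 wB t] wl unfolding A2_def by simp
    ultimately show "\<bar>sig_coeff \<gamma> a s w * sig_coeff \<sigma> a t w\<bar> \<le> (A1 ^ k / fact k) * (A2 ^ k / fact k)"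
      unfolding abs_mult by (intro mult_mono) auto
  qed
  also have "\<dots> = real DIM('v) ^ k * (A1 ^ k / fact k) * (A2 ^ k / fact k)"
    using card by simp
  also have "\<dots> = (real DIM('v) * A1 * A2) ^ k / fact k / fact k"
    by (simp add: power_mult_distrib)
  also have "\<dots> \<le> (real DIM('v) * A1 * A2) ^ k / fact k"
  proof -
    have y0: "0 \<le> (real DIM('v) * A1 * A2) ^ k / fact k" using A0 by simp
    have "1 / fact k \<le> (1::real)" by simp
    then have "(real DIM('v) * A1 * A2) ^ k / fact k * (1 / fact k) \<le> (real DIM('v) * A1 * A2) ^ k / fact k * 1"
      using y0 by (intro mult_left_mono) auto
    then show ?thesis by simp
  qed
  finally show ?thesis unfolding A1_def A2_def .
qed

end



lemma S_leb: "{-pi<..<pi} \<in> sets lebesgue"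
  by simp

lemma words0: "words 0 = {[]}"
  unfolding words_def by auto

theorem mainTheorem9:
  fixes \<gamma> \<sigma> :: "real \<Rightarrow> 'v::euclidean_space"
    and f :: "real \<Rightarrow> complex"
    and a b s t :: real
  assumes "continuous_on {a..b} \<gamma>" and "bounded_variation_on a b \<gamma>"
    and "continuous_on {a..b} \<sigma>" and "bounded_variation_on a b \<sigma>"
    and "bounded (f ` {-pi<..<pi})"
    and "f absolutely_integrable_on {-pi<..<pi}"
    and "s \<in> {a..b}" and "t \<in> {a..b}"
  shows "((\<forall>k<0. fourier_coeff f k = 0) \<longrightarrow>
           K_phi (fourier_coeff f) \<gamma> \<sigma> a s t =
             integral {-pi<..<pi} (\<lambda>x. K_scaled (cis (- x)) \<gamma> \<sigma> a s t * f x) / (2 * pi)) \<and>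
         ((\<forall>x\<in>{-pi<..<pi}. Im (f x) = 0) \<longrightarrow>
           K_phi_real (fourier_cos (\<lambda>x. Re (f x))) \<gamma> \<sigma> a s t =
             integral {-pi<..<pi} (\<lambda>x. Re (K_scaled (cis x) \<gamma> \<sigma> a s t) * Re (f x)) / pi
               - fourier_cos (\<lambda>x. Re (f x)) 0)"
proof -
  have ab: "a \<le> b" using assms(7) by simp
  define S where "S = {-pi<..<pi}"
  have SL: "S \<in> sets lebesgue" unfolding S_def by (rule S_leb)
  have fi: "f absolutely_integrable_on S" using assms(6) unfolding S_def .
  define c where "c k = sig_ip \<gamma> \<sigma> a k s t" for k
  define D where "D = real DIM('v) * var \<gamma> a b * var \<sigma> a b"
  have cb: "\<bar>c k\<bar> \<le> D ^ k / fact k" for k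
    unfolding c_def D_def by (rule sig_ip_bound[OF ab assms(1-4,7,8)])
  have cs: "summable (\<lambda>k. \<bar>c k\<bar>)"
  proof (rule summable_comparison_test[OF _ summable_exp[of D]])
    show "\<exists>N. \<forall>n\<ge>N. norm \<bar>c n\<bar> \<le> inverse (fact n) * D ^ n"
      using cb by (auto simp: divide_inverse mult.commute)
  qed
  have c0: "c 0 = 1"
    unfolding c_def sig_ip_def words0 sig_coeff_def by simp
  have nfi: "(\<lambda>x. norm (f x)) integrable_on S" using fi unfolding absolutely_integrable_on_def by blast
  have part1: "K_phi (fourier_coeff f) \<gamma> \<sigma> a s t =
             integral S (\<lambda>x. K_scaled (cis (- x)) \<gamma> \<sigma> a s t * f x) / (2 * pi)"
    if neg: "\<forall>k<0. fourier_coeff f k = 0"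
  proof -
    define \<phi> where "\<phi> = fourier_coeff f"
    define u where "u k x = cis (- x) ^ k" for k x
    have ub: "norm (u k x) \<le> 1" for k x by (simp add: u_def norm_power)
    have ui: "(\<lambda>x. u k x * f x) integrable_on S" for k
      by (rule prod_int[OF fi SL _ ub]) (unfold u_def, intro continuous_intros)
    define J where "J k = integral S (\<lambda>x. u k x * f x)" for k
    have J\<phi>: "J k = 2 * of_real pi * \<phi> (int k)" for k
    proof -
      have "J k = integral S (\<lambda>x. f x * cis (- (of_int (int k) * x)))"
        unfolding J_def u_def
      proof (rule integral_cong)
        fix x
        have "cis (- x) ^ k = cis (real k * (- x))" by (rule Complex.DeMoivre)
        then have "cis (- x) ^ k = cis (- (real k * x))" by simp
        then show "cis (- x) ^ k * f x = f x * cis (- (of_int (int k) * x))" by (simp add: mult.commute)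
      qed
      then show ?thesis unfolding \<phi>_def fourier_coeff_def S_def by simp
    qed
    have Jb: "norm (J k) \<le> integral S (\<lambda>x. norm (f x))" for k
      unfolding J_def by (rule integral_norm_bound_integral[OF ui nfi]) (simp add: norm_mult u_def norm_power)
    have ser: "(\<lambda>k. of_real (c k) * J k) sums integral S (\<lambda>x. (\<Sum>k. of_real (c k) * u k x) * f x)"
      unfolding J_def by (rule series_integral[OF cs ui ub fi])
    have Keq: "(\<lambda>x. (\<Sum>k. of_real (c k) * u k x) * f x) = (\<lambda>x. K_scaled (cis (- x)) \<gamma> \<sigma> a s t * f x)"
      by (simp add: K_scaled_def c_def u_def mult.commute)
    have ser2: "(\<lambda>k. \<phi> (int k) * of_real (c k)) sums (integral S (\<lambda>x. K_scaled (cis (- x)) \<gamma> \<sigma> a s t * f x) / (2 * pi))"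
    proof -
      have "(\<lambda>k. of_real (c k) * J k / (2 * of_real pi)) sums (integral S (\<lambda>x. K_scaled (cis (- x)) \<gamma> \<sigma> a s t * f x) / (2 * of_real pi))"
        using sums_divide[OF ser] unfolding Keq .
      moreover have "of_real (c k) * J k / (2 * of_real pi) = \<phi> (int k) * of_real (c k)" for k
        unfolding J\<phi> by simp
      ultimately show ?thesis by simp
    qed
    have nsum: "summable (\<lambda>k. norm (\<phi> (int k) * of_real (c k)))"
    proof (rule summable_comparison_test[OF _ summable_mult[OF cs, of "integral S (\<lambda>x. norm (f x)) / (2 * pi)"]])
      show "\<exists>N. \<forall>n\<ge>N. norm (norm (\<phi> (int n) * complex_of_real (c n))) \<le> integral S (\<lambda>x. norm (f x)) / (2 * pi) * \<bar>c n\<bar>"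
      proof (intro exI allI impI)
        fix n :: nat
        have "norm (\<phi> (int n)) = norm (J n) / (2 * pi)" unfolding J\<phi> by (simp add: norm_mult)
        also have "\<dots> \<le> integral S (\<lambda>x. norm (f x)) / (2 * pi)" using Jb[of n] by (simp add: divide_right_mono)
        finally have "norm (\<phi> (int n)) * \<bar>c n\<bar> \<le> integral S (\<lambda>x. norm (f x)) / (2 * pi) * \<bar>c n\<bar>"
          by (rule mult_right_mono) simp
        then show "norm (norm (\<phi> (int n) * complex_of_real (c n))) \<le> integral S (\<lambda>x. norm (f x)) / (2 * pi) * \<bar>c n\<bar>"
          by (simp add: norm_mult)
      qed
    qed
    have hs: "((\<lambda>k. \<phi> (int k) * of_real (c k)) has_sum (integral S (\<lambda>x. K_scaled (cis (- x)) \<gamma> \<sigma> a s t * f x) / (2 * pi))) UNIV"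
      by (rule norm_summable_imp_has_sum[OF nsum ser2])
    define g where "g k = \<phi> k * of_real (sig_ip \<gamma> \<sigma> a (nat \<bar>k\<bar>) s t)" for k :: int
    have "((g \<circ> int) has_sum (integral S (\<lambda>x. K_scaled (cis (- x)) \<gamma> \<sigma> a s t * f x) / (2 * pi))) UNIV"
      using hs by (simp add: g_def c_def o_def)
    then have "(g has_sum (integral S (\<lambda>x. K_scaled (cis (- x)) \<gamma> \<sigma> a s t * f x) / (2 * pi))) (range int)"
      using has_sum_reindex[of int UNIV g] by simp
    then have "(g has_sum (integral S (\<lambda>x. K_scaled (cis (- x)) \<gamma> \<sigma> a s t * f x) / (2 * pi))) UNIV"
    proof (subst has_sum_cong_neutral[where g=g and T="range int"])
      fix k :: int assume "k \<in> UNIV - range int"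
      then have "k < 0" by (metis Diff_iff nonneg_int_cases not_less rangeI)
      then show "g k = 0" using neg unfolding g_def \<phi>_def by simp
    qed auto
    then show ?thesis unfolding K_phi_def g_def \<phi>_def by (rule infsumI)
  qed
  have part2: "K_phi_real (fourier_cos (\<lambda>x. Re (f x))) \<gamma> \<sigma> a s t =
             integral S (\<lambda>x. Re (K_scaled (cis x) \<gamma> \<sigma> a s t) * Re (f x)) / pi
               - fourier_cos (\<lambda>x. Re (f x)) 0"
  proof -
    define g where "g x = Re (f x)" for x
    define ak where "ak = fourier_cos g"
    have gi: "g absolutely_integrable_on S"
      using absolutely_integrable_linear[OF fi bounded_linear_Re] unfolding g_def o_def .
    define u where "u k x = cos (real k * x)" for k x
    have ub: "norm (u k x) \<le> 1" for k x by (simp add: u_def)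
    have ui: "(\<lambda>x. u k x * g x) integrable_on S" for k
      by (rule prod_int[OF gi SL _ ub]) (unfold u_def, intro continuous_intros)
    define J where "J k = integral S (\<lambda>x. u k x * g x)" for k
    have ser: "(\<lambda>k. c k * J k) sums integral S (\<lambda>x. (\<Sum>k. c k * u k x) * g x)"
      using series_integral[OF cs ui ub gi] unfolding J_def by simp
    have Keq: "Re (K_scaled (cis x) \<gamma> \<sigma> a s t) = (\<Sum>k. c k * u k x)" for x
    proof -
      have "summable (\<lambda>k. cis x ^ k * of_real (c k))"
        by (rule summable_comparison_test[OF _ cs]) (auto simp: norm_mult norm_power)
      then have "(\<lambda>k. cis x ^ k * of_real (c k)) sums K_scaled (cis x) \<gamma> \<sigma> a s t"
        unfolding K_scaled_def c_def by (simp add: summable_sums)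
      have pw: "cis x ^ k = cis (real k * x)" for k by (rule Complex.DeMoivre)
      from sums_Re[OF \<open>(\<lambda>k. cis x ^ k * of_real (c k)) sums K_scaled (cis x) \<gamma> \<sigma> a s t\<close>]
      have "(\<lambda>k. c k * u k x) sums Re (K_scaled (cis x) \<gamma> \<sigma> a s t)"
        by (simp add: u_def pw mult.commute)
      then show ?thesis by (simp add: sums_iff)
    qed
    have dk: "c k * J k / pi = ak k * c k + (if k = 0 then ak 0 else 0)" for k
    proof (cases "k = 0")
      case True
      have "J 0 = integral S g" unfolding J_def u_def by simp
      then show ?thesis using True c0 unfolding ak_def fourier_cos_def S_def by simp
    next
      case False
      have "J k = integral S (\<lambda>x. g x * cos (real k * x))" unfolding J_def u_def by (simp add: mult.commute)
      then show ?thesis using False unfolding ak_def fourier_cos_def S_def by simp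
    qed
    have "(\<lambda>k. c k * J k / pi - (if k = 0 then ak 0 else 0)) sums
          (integral S (\<lambda>x. (\<Sum>k. c k * u k x) * g x) / pi - ak 0)"
      by (rule sums_diff[OF sums_divide[OF ser] sums_single])
    then have "(\<lambda>k. ak k * c k) sums (integral S (\<lambda>x. Re (K_scaled (cis x) \<gamma> \<sigma> a s t) * g x) / pi - ak 0)"
      unfolding dk Keq by simp
    then show ?thesis unfolding K_phi_real_def ak_def g_def c_def by (simp add: sums_iff)
  qed
  show ?thesis using part1 part2 unfolding S_def by blast
qed


end
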